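(* Let $\mathbb K$ be algebraically closed of characteristic zero, $T$ a torus with Lie algebra $\mathfrak t$, $V$ a finite-dimensional $T$-module, and $\mu:V\oplus V^*\to\mathfrak t^*$, $\mu(x,y)(\xi)=y(\xi\cdot x)$. If $(x,y)\in\mu^{-1}(0)$ is such that $T\cdot x$ is closed in $V$ and $T\cdot y$ is closed in $V^*$, then $T\cdot(x,y)$ is closed in $V\oplus V^*$. *)

theory Defs
  imports "HOL-Computational_Algebra.Polynomial"
begin

text \<open>A torus of rank r is (K^*)^r, elements are t :: nat => 'k
  with t j nonzero for j < r (normalized to 1 for j >= r). A finite-dimensional T-module V
  of dimension n is K^n with a weight basis e_0..e_{n-1}; w i :: nat => int is the weight
  (character) of e_i.\<close>

definition torus :: "nat \<Rightarrow> (nat \<Rightarrow> 'k::field) set" where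
  "torus r = {t. (\<forall>j<r. t j \<noteq> 0) \<and> (\<forall>j. r \<le> j \<longrightarrow> t j = 1)}"

definition vecs :: "nat \<Rightarrow> (nat \<Rightarrow> 'k::zero) set" where
  "vecs n = {x. \<forall>i. n \<le> i \<longrightarrow> x i = 0}"

definition char_val :: "nat \<Rightarrow> (nat \<Rightarrow> int) \<Rightarrow> (nat \<Rightarrow> 'k::field) \<Rightarrow> 'k" where
  "char_val r a t = (\<Prod>j<r. t j powi a j)"

definition act_V :: "nat \<Rightarrow> (nat \<Rightarrow> nat \<Rightarrow> int) \<Rightarrow> (nat \<Rightarrow> 'k::field) \<Rightarrow> (nat \<Rightarrow> 'k) \<Rightarrow> (nat \<Rightarrow> 'k)" where
  "act_V r w t x = (\<lambda>i. char_val r (w i) t * x i)"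

text \<open>Contragredient action of T on V^*, in the dual basis: (t.f)(v) = f(t^{-1}.v).\<close>
definition act_Vd :: "nat \<Rightarrow> (nat \<Rightarrow> nat \<Rightarrow> int) \<Rightarrow> (nat \<Rightarrow> 'k::field) \<Rightarrow> (nat \<Rightarrow> 'k) \<Rightarrow> (nat \<Rightarrow> 'k)" where
  "act_Vd r w t y = (\<lambda>i. char_val r (\<lambda>j. - w i j) t * y i)"

definition lie_act :: "nat \<Rightarrow> (nat \<Rightarrow> nat \<Rightarrow> int) \<Rightarrow> (nat \<Rightarrow> 'k::field) \<Rightarrow> (nat \<Rightarrow> 'k) \<Rightarrow> (nat \<Rightarrow> 'k)" where
  "lie_act r w \<xi> x = (\<lambda>i. (\<Sum>j<r. of_int (w i j) * \<xi> j) * x i)"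

definition pairing :: "nat \<Rightarrow> (nat \<Rightarrow> 'k::field) \<Rightarrow> (nat \<Rightarrow> 'k) \<Rightarrow> 'k" where
  "pairing n y v = (\<Sum>i<n. y i * v i)"

definition moment :: "nat \<Rightarrow> nat \<Rightarrow> (nat \<Rightarrow> nat \<Rightarrow> int) \<Rightarrow> (nat \<Rightarrow> 'k::field) \<Rightarrow> (nat \<Rightarrow> 'k) \<Rightarrow> (nat \<Rightarrow> 'k) \<Rightarrow> 'k" where
  "moment r n w x y \<xi> = pairing n y (lie_act r w \<xi> x)"

definition pairvec :: "(nat \<Rightarrow> 'k) \<Rightarrow> (nat \<Rightarrow> 'k) \<Rightarrow> (nat + nat \<Rightarrow> 'k)" where
  "pairvec x y = case_sum x y"

inductive_set polyfun :: "'v set \<Rightarrow> (('v \<Rightarrow> 'k::comm_ring_1) \<Rightarrow> 'k) set" for I :: "'v set" where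
  pf_const: "(\<lambda>_. c) \<in> polyfun I"
| pf_var: "v \<in> I \<Longrightarrow> (\<lambda>x. x v) \<in> polyfun I"
| pf_add: "f \<in> polyfun I \<Longrightarrow> g \<in> polyfun I \<Longrightarrow> (\<lambda>x. f x + g x) \<in> polyfun I"
| pf_mult: "f \<in> polyfun I \<Longrightarrow> g \<in> polyfun I \<Longrightarrow> (\<lambda>x. f x * g x) \<in> polyfun I"

definition aff_space :: "'v set \<Rightarrow> ('v \<Rightarrow> 'k::zero) set" where
  "aff_space I = {x. \<forall>v. v \<notin> I \<longrightarrow> x v = 0}"

definition zariski_closed :: "'v set \<Rightarrow> ('v \<Rightarrow> 'k::comm_ring_1) set \<Rightarrow> bool" where
  "zariski_closed I S \<longleftrightarrow> S \<subseteq> aff_space I \<and>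
     (\<exists>F \<subseteq> polyfun I. S = {x \<in> aff_space I. \<forall>f\<in>F. f x = 0})"

definition alg_closed_field :: "'k::field itself \<Rightarrow> bool" where
  "alg_closed_field _ \<longleftrightarrow> (\<forall>p::'k poly. 0 < degree p \<longrightarrow> (\<exists>z. poly p z = 0))"

end

theory Submission
  imports Defs
begin

definition rel_ok :: "nat \<Rightarrow> 'a set \<Rightarrow> ('a \<Rightarrow> nat \<Rightarrow> int) \<Rightarrow> ('a \<Rightarrow> 'k::field) \<Rightarrow> bool" where
  "rel_ok r A W u \<longleftrightarrow> (\<forall>c. (\<forall>j<r. (\<Sum>v\<in>A. c v * W v j) = 0) \<longrightarrow> (\<Prod>v\<in>A. u v powi c v) = 1)"

lemma root_exists:
  assumes "alg_closed_field TYPE('k::field)" "g > 0"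
  shows "\<exists>s::'k. s ^ g = b"
proof -
  let ?p = "monom (1::'k) g - [:b:]"
  have "coeff ?p g = 1" using assms(2) by (cases g) (auto simp: coeff_monom)
  hence "g \<le> degree ?p" by (metis le_degree one_neq_zero)
  hence "0 < degree ?p" using assms(2) by simp
  then obtain z where "poly ?p z = 0" using assms(1) unfolding alg_closed_field_def by blast
  hence "z ^ g = b" by (simp add: poly_monom)
  thus ?thesis by blast
qed


lemma step:
  fixes u :: "'a \<Rightarrow> 'k::field"
  assumes alg: "alg_closed_field TYPE('k)" and fin: "finite A" and a: "a \<notin> A"
    and nz: "\<forall>v\<in>A. u v \<noteq> 0" and ok: "rel_ok r A W u"
  shows "\<exists>s0. s0 \<noteq> 0 \<and> rel_ok r (insert a A) W (u(a := s0))"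
proof -
  define Sp where "Sp k \<longleftrightarrow> (\<exists>c. \<forall>j<r. k * W a j = (\<Sum>v\<in>A. c v * W v j))" for k :: int
  have Sp_rel: "Sp (- c a)" if "\<forall>j<r. (\<Sum>v\<in>insert a A. c v * W v j) = 0" for c
  proof -
    have "\<forall>j<r. - c a * W a j = (\<Sum>v\<in>A. c v * W v j)"
    proof (intro allI impI)
      fix j assume "j < r"
      hence "c a * W a j + (\<Sum>v\<in>A. c v * W v j) = 0" using that fin a by simp
      thus "- c a * W a j = (\<Sum>v\<in>A. c v * W v j)" by linarith
    qed
    thus ?thesis unfolding Sp_def by (rule exI[where x=c])
  qed
  have prod_ins: "(\<Prod>v\<in>insert a A. (u(a:=s)) v powi c v) = s powi c a * (\<Prod>v\<in>A. u v powi c v)" for s c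
  proof -
    have "(\<Prod>v\<in>A. (u(a:=s)) v powi c v) = (\<Prod>v\<in>A. u v powi c v)"
      by (rule prod.cong) (use a in auto)
    thus ?thesis using fin a by simp
  qed
  show ?thesis
  proof (cases "\<forall>k. Sp k \<longrightarrow> k = 0")
    case True
    have "rel_ok r (insert a A) W (u(a := 1))"
      unfolding rel_ok_def
    proof (intro allI impI)
      fix c assume rel: "\<forall>j<r. (\<Sum>v\<in>insert a A. c v * W v j) = 0"
      hence "c a = 0" using Sp_rel[OF rel] True by force
      hence "\<forall>j<r. (\<Sum>v\<in>A. c v * W v j) = 0" using rel fin a by simp
      hence "(\<Prod>v\<in>A. u v powi c v) = 1" using ok unfolding rel_ok_def by blast
      thus "(\<Prod>v\<in>insert a A. (u(a:=1)) v powi c v) = 1" unfolding prod_ins by simp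
    qed
    thus ?thesis by (intro exI[of _ 1]) simp
  next
    case False
    then obtain k0 where k0: "Sp k0" "k0 \<noteq> 0" by blast
    have Sp_neg: "Sp (- k)" if "Sp k" for k
    proof -
      from that obtain c where "\<forall>j<r. k * W a j = (\<Sum>v\<in>A. c v * W v j)" unfolding Sp_def by (elim exE)
      moreover have "(\<Sum>v\<in>A. (- c v) * W v j) = - (\<Sum>v\<in>A. c v * W v j)" for j
        by (simp add: sum_negf[symmetric])
      ultimately have "\<forall>j<r. (- k) * W a j = (\<Sum>v\<in>A. (- c v) * W v j)"
        by simp
      thus ?thesis unfolding Sp_def by (rule exI[where x="\<lambda>v. - c v"])
    qed
    have Sp_lin: "Sp (k1 - q * k2)" if "Sp k1" "Sp k2" for k1 k2 q
    proof -
      from that obtain c1 c2 where c1: "\<forall>j<r. k1 * W a j = (\<Sum>v\<in>A. c1 v * W v j)"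
        and c2: "\<forall>j<r. k2 * W a j = (\<Sum>v\<in>A. c2 v * W v j)" unfolding Sp_def by (elim exE)
      have "\<forall>j<r. (k1 - q * k2) * W a j = (\<Sum>v\<in>A. (c1 v - q * c2 v) * W v j)"
      proof (intro allI impI)
        fix j assume j: "j < r"
        have p: "(\<Sum>v\<in>A. (c1 v - q * c2 v) * W v j) = (\<Sum>v\<in>A. c1 v * W v j) - q * (\<Sum>v\<in>A. c2 v * W v j)"
          by (simp add: algebra_simps sum_subtractf sum_distrib_left)
        have e1: "k1 * W a j = (\<Sum>v\<in>A. c1 v * W v j)" using c1 j by blast
        have e2: "k2 * W a j = (\<Sum>v\<in>A. c2 v * W v j)" using c2 j by blast
        have "(k1 - q * k2) * W a j = k1 * W a j - q * (k2 * W a j)" by (simp add: algebra_simps)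
        also have "\<dots> = (\<Sum>v\<in>A. c1 v * W v j) - q * (\<Sum>v\<in>A. c2 v * W v j)" by (simp only: e1 e2)
        also have "\<dots> = (\<Sum>v\<in>A. (c1 v - q * c2 v) * W v j)" by (rule p[symmetric])
        finally show "(k1 - q * k2) * W a j = (\<Sum>v\<in>A. (c1 v - q * c2 v) * W v j)" .
      qed
      thus ?thesis unfolding Sp_def by (rule exI[where x="\<lambda>v. c1 v - q * c2 v"])
    qed
    have "\<exists>m::nat. m > 0 \<and> Sp (int m)"
    proof (cases "k0 > 0")
      case True thus ?thesis using k0 by (intro exI[of _ "nat k0"]) simp
    next
      case False thus ?thesis using k0 Sp_neg[OF k0(1)] by (intro exI[of _ "nat (- k0)"]) simp
    qed
    define g where "g = (LEAST m::nat. m > 0 \<and> Sp (int m))"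
    have g: "g > 0" "Sp (int g)" using LeastI_ex[OF \<open>\<exists>m::nat. m > 0 \<and> Sp (int m)\<close>] unfolding g_def by auto
    have gmin: "m > 0 \<Longrightarrow> Sp (int m) \<Longrightarrow> g \<le> m" for m unfolding g_def by (simp add: Least_le)
    have gdvd: "int g dvd k" if "Sp k" for k
    proof -
      have "Sp (k - (k div int g) * int g)" by (rule Sp_lin[OF that g(2)])
      hence Sm: "Sp (k mod int g)" by (simp add: minus_div_mult_eq_mod)
      have "k mod int g \<ge> 0" "k mod int g < int g" using g(1) by auto
      show ?thesis
      proof (rule ccontr)
        assume "\<not> int g dvd k"
        hence "k mod int g \<noteq> 0" by (simp add: dvd_eq_mod_eq_0)
        hence "nat (k mod int g) > 0" using \<open>k mod int g \<ge> 0\<close> by simp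
        moreover have "Sp (int (nat (k mod int g)))" using Sm \<open>k mod int g \<ge> 0\<close> by simp
        ultimately have "g \<le> nat (k mod int g)" by (rule gmin)
        hence "int g \<le> int (nat (k mod int g))" by (simp only: of_nat_le_iff)
        thus False using \<open>k mod int g < int g\<close> \<open>k mod int g \<ge> 0\<close> by linarith
      qed
    qed
    from g(2) obtain ac where ac: "\<forall>j<r. int g * W a j = (\<Sum>v\<in>A. ac v * W v j)" unfolding Sp_def by (elim exE)
    define b where "b = (\<Prod>v\<in>A. u v powi ac v)"
    have bnz: "b \<noteq> 0" unfolding b_def using nz fin by (simp add: power_int_not_zero)
    obtain s where s: "s ^ g = b" using root_exists[OF alg g(1)] by blast
    have snz: "s \<noteq> 0" using s bnz g(1) by auto
    have "rel_ok r (insert a A) W (u(a := s))"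
      unfolding rel_ok_def
    proof (intro allI impI)
      fix c assume rel: "\<forall>j<r. (\<Sum>v\<in>insert a A. c v * W v j) = 0"
      have "int g dvd c a" using gdvd[OF Sp_rel[OF rel]] by simp
      then obtain m where m: "c a = int g * m" unfolding dvd_def by blast
      have rel2: "\<forall>j<r. (\<Sum>v\<in>A. (c v + m * ac v) * W v j) = 0"
      proof (intro allI impI)
        fix j assume j: "j < r"
        have "(\<Sum>v\<in>A. (c v + m * ac v) * W v j) = (\<Sum>v\<in>A. c v * W v j) + m * (\<Sum>v\<in>A. ac v * W v j)"
          by (simp add: algebra_simps sum.distrib sum_distrib_left)
        also have "(\<Sum>v\<in>A. c v * W v j) = - c a * W a j"
        proof -
          have "c a * W a j + (\<Sum>v\<in>A. c v * W v j) = 0" using rel j fin a by simp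
          thus ?thesis by linarith
        qed
        also have "(\<Sum>v\<in>A. ac v * W v j) = int g * W a j" using ac j by simp
        finally have eq: "(\<Sum>v\<in>A. (c v + m * ac v) * W v j) = - c a * W a j + m * (int g * W a j)" .
        have "- c a * W a j + m * (int g * W a j) = 0" unfolding m by (simp add: algebra_simps)
        thus "(\<Sum>v\<in>A. (c v + m * ac v) * W v j) = 0" using eq by simp
      qed
      have "1 = (\<Prod>v\<in>A. u v powi (c v + m * ac v))" using ok rel2 unfolding rel_ok_def by auto
      also have "\<dots> = (\<Prod>v\<in>A. u v powi c v * (u v powi ac v) powi m)"
        by (rule prod.cong) (use nz in \<open>auto simp: power_int_add power_int_mult[symmetric] mult.commute[of m]\<close>)
      also have "\<dots> = (\<Prod>v\<in>A. u v powi c v) * (\<Prod>v\<in>A. (u v powi ac v) powi m)"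
        by (simp add: prod.distrib)
      also have "(\<Prod>v\<in>A. (u v powi ac v) powi m) = b powi m"
        unfolding b_def using fin by (induction A rule: finite_induct) (auto simp: power_int_mult_distrib)
      finally have e1: "(\<Prod>v\<in>A. u v powi c v) * b powi m = 1" by simp
      have "s powi c a = b powi m"
        unfolding m power_int_mult by (simp add: s)
      hence "(\<Prod>v\<in>insert a A. (u(a:=s)) v powi c v) = b powi m * (\<Prod>v\<in>A. u v powi c v)"
        unfolding prod_ins by simp
      also have "\<dots> = 1" using e1 by (simp add: mult.commute)
      finally show "(\<Prod>v\<in>insert a A. (u(a:=s)) v powi c v) = 1" .
    qed
    thus ?thesis using snz by blast
  qed
qed

lemma iterate:
  fixes u :: "'a \<Rightarrow> 'k::field"
  assumes alg: "alg_closed_field TYPE('k)" and fin: "finite S"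
    and nz: "\<forall>v\<in>S. u v \<noteq> 0" and ok: "rel_ok r S W u"
  shows "m \<le> r \<Longrightarrow> \<exists>s. (\<forall>j<m. s j \<noteq> 0) \<and>
    rel_ok r (Inl ` S \<union> Inr ` {..<m}) (case_sum W (\<lambda>j i. if i = j then 1 else 0)) (case_sum u s)"
proof (induction m)
  case 0
  have "rel_ok r (Inl ` S) (case_sum W (\<lambda>j i. if i = j then 1 else 0)) (case_sum u (\<lambda>_. 1))"
    unfolding rel_ok_def
  proof (intro allI impI)
    fix c :: "'a + nat \<Rightarrow> int"
    assume "\<forall>j<r. (\<Sum>v\<in>Inl ` S. c v * case_sum W (\<lambda>j i. if i = j then 1 else 0) v j) = 0"
    hence "\<forall>j<r. (\<Sum>v\<in>S. (c \<circ> Inl) v * W v j) = 0" by (simp add: sum.reindex)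
    hence "(\<Prod>v\<in>S. u v powi (c \<circ> Inl) v) = 1" using ok unfolding rel_ok_def by blast
    thus "(\<Prod>v\<in>Inl ` S. case_sum u (\<lambda>_. 1) v powi c v) = 1" by (simp add: prod.reindex)
  qed
  thus ?case by auto
next
  case (Suc m)
  then obtain s where s: "\<forall>j<m. s j \<noteq> 0"
    "rel_ok r (Inl ` S \<union> Inr ` {..<m}) (case_sum W (\<lambda>j i. if i = j then 1 else 0)) (case_sum u s)"
    by auto
  let ?A = "Inl ` S \<union> Inr ` {..<m}"
  have "\<forall>v\<in>?A. case_sum u s v \<noteq> 0" using s(1) nz by auto
  then obtain s0 where s0: "s0 \<noteq> 0"
    "rel_ok r (insert (Inr m) ?A) (case_sum W (\<lambda>j i. if i = j then 1 else 0)) ((case_sum u s)(Inr m := s0))"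
    using step[OF alg _ _ _ s(2), of "Inr m"] fin by auto
  have e1: "(case_sum u s)(Inr m := s0) = case_sum u (s(m := s0))"
    by (rule ext) (auto split: sum.split)
  have e2: "insert (Inr m) ?A = Inl ` S \<union> Inr ` {..<Suc m}" by (auto simp: lessThan_Suc)
  show ?case using s0 s(1) e1 e2 by (intro exI[of _ "s(m := s0)"]) (auto simp: less_Suc_eq)
qed

lemma torus_solve:
  fixes u :: "'a \<Rightarrow> 'k::field"
  assumes alg: "alg_closed_field TYPE('k)" and fin: "finite S"
    and nz: "\<forall>v\<in>S. u v \<noteq> 0" and ok: "rel_ok r S W u"
  shows "\<exists>t\<in>torus r. \<forall>v\<in>S. char_val r (W v) t = u v"
proof -
  define E :: "nat \<Rightarrow> nat \<Rightarrow> int" where "E = (\<lambda>j i. if i = j then 1 else 0)"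
  obtain s where s: "\<forall>j<r. s j \<noteq> 0" "rel_ok r (Inl ` S \<union> Inr ` {..<r}) (case_sum W E) (case_sum u s)"
    using iterate[OF alg fin nz ok, of r] unfolding E_def by auto
  define t where "t = (\<lambda>j. if j < r then s j else 1)"
  have t: "t \<in> torus r" unfolding torus_def t_def using s(1) by auto
  have "char_val r (W v) t = u v" if v: "v \<in> S" for v
  proof -
    define c where "c = (\<lambda>q. case q of Inl v' \<Rightarrow> (if v' = v then 1 else 0) | Inr j \<Rightarrow> - W v j)"
    have disj: "Inl ` S \<inter> Inr ` {..<r} = {}" by auto
    have rel: "\<forall>j'<r. (\<Sum>q\<in>Inl ` S \<union> Inr ` {..<r}. c q * case_sum W E q j') = 0"
    proof (intro allI impI)
      fix j' assume j': "j' < r"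
      have "(\<Sum>q\<in>Inl ` S \<union> Inr ` {..<r}. c q * case_sum W E q j')
          = (\<Sum>q\<in>Inl ` S. c q * case_sum W E q j') + (\<Sum>q\<in>Inr ` {..<r}. c q * case_sum W E q j')"
        by (rule sum.union_disjoint) (use fin disj in auto)
      also have "(\<Sum>q\<in>Inl ` S. c q * case_sum W E q j') = (\<Sum>v'\<in>S. if v' = v then W v j' else 0)"
        by (auto simp: sum.reindex c_def intro!: sum.cong)
      also have "\<dots> = W v j'" using fin v by simp
      also have "(\<Sum>q\<in>Inr ` {..<r}. c q * case_sum W E q j') = (\<Sum>j<r. c (Inr j) * E j j')"
        by (simp add: sum.reindex)
      also have "\<dots> = (\<Sum>j<r. if j = j' then - W v j' else 0)"
        by (rule sum.cong) (auto simp: c_def E_def)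
      also have "\<dots> = - W v j'" using j' by simp
      finally show "(\<Sum>q\<in>Inl ` S \<union> Inr ` {..<r}. c q * case_sum W E q j') = 0" by simp
    qed
    have "1 = (\<Prod>q\<in>Inl ` S \<union> Inr ` {..<r}. case_sum u s q powi c q)"
      using s(2) rel unfolding rel_ok_def by auto
    also have "\<dots> = (\<Prod>q\<in>Inl ` S. case_sum u s q powi c q) * (\<Prod>q\<in>Inr ` {..<r}. case_sum u s q powi c q)"
      by (rule prod.union_disjoint) (use fin disj in auto)
    also have "(\<Prod>q\<in>Inl ` S. case_sum u s q powi c q) = (\<Prod>v'\<in>S. if v' = v then u v else 1)"
      by (auto simp: prod.reindex c_def intro!: prod.cong)
    also have "\<dots> = u v" using fin v by simp
    also have "(\<Prod>q\<in>Inr ` {..<r}. case_sum u s q powi c q) = (\<Prod>j<r. inverse (t j powi W v j))"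
      by (auto simp: prod.reindex c_def t_def power_int_minus intro!: prod.cong)
    also have "\<dots> = inverse (char_val r (W v) t)" unfolding char_val_def using prod_inversef[of "\<lambda>j. t j powi W v j" "{..<r}"] by (simp add: o_def)
    finally have "u v * inverse (char_val r (W v) t) = 1" by simp
    thus ?thesis by (metis inverse_unique inverse_inverse_eq)
  qed
  thus ?thesis using t by blast
qed


lemma pf_comp:
  assumes "f \<in> polyfun I" "\<forall>v\<in>I. h v \<in> J"
  shows "(\<lambda>p. f (p \<circ> h)) \<in> polyfun J"
  using assms
proof (induction rule: polyfun.induct)
  case (pf_const c) show ?case by (rule polyfun.pf_const)
next
  case (pf_var v) thus ?case using polyfun.pf_var[of "h v" J] by (simp add: o_def)
next
  case (pf_add f g) thus ?case using polyfun.pf_add by fastforce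
next
  case (pf_mult f g) thus ?case using polyfun.pf_mult by fastforce
qed

lemma pf_pow: "f \<in> polyfun I \<Longrightarrow> (\<lambda>x. f x ^ k) \<in> polyfun I"
proof (induction k)
  case 0 thus ?case using polyfun.pf_const[of 1] by simp
next
  case (Suc k) thus ?case using polyfun.pf_mult[OF Suc.prems Suc.IH[OF Suc.prems]] by simp
qed

lemma pf_prod: "finite A \<Longrightarrow> (\<And>a. a \<in> A \<Longrightarrow> f a \<in> polyfun I) \<Longrightarrow> (\<lambda>x. \<Prod>a\<in>A. f a x) \<in> polyfun I"
proof (induction A rule: finite_induct)
  case empty thus ?case using polyfun.pf_const[of 1] by simp
next
  case (insert a A) thus ?case using polyfun.pf_mult[of "f a" I "\<lambda>x. \<Prod>a\<in>A. f a x"] by simp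
qed

lemma pf_sub: "f \<in> polyfun I \<Longrightarrow> g \<in> polyfun I \<Longrightarrow> (\<lambda>x. f x - g x) \<in> polyfun I"
proof -
  assume a: "f \<in> polyfun I" "g \<in> polyfun I"
  have "(\<lambda>x. f x + (\<lambda>_. - 1) x * g x) \<in> polyfun I"
    by (intro polyfun.pf_add polyfun.pf_mult polyfun.pf_const a)
  thus ?thesis by simp
qed

lemma char_val_nz: "t \<in> torus r \<Longrightarrow> char_val r a t \<noteq> (0::'k::field)"
  unfolding char_val_def torus_def by (auto simp: power_int_not_zero)

lemma char_val_cong: "(\<forall>j<r. a j = b j) \<Longrightarrow> char_val r a t = char_val r b t"
  unfolding char_val_def by simp

lemma char_val_powi: "t \<in> torus r \<Longrightarrow> char_val r a t powi k = char_val r (\<lambda>j. k * a j) (t::nat\<Rightarrow>'k::field)"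
proof -
  assume t: "t \<in> torus r"
  have "(\<Prod>j<r. t j powi a j) powi k = (\<Prod>j<r. (t j powi a j) powi k)"
    by (induction r) (auto simp: power_int_mult_distrib)
  also have "\<dots> = (\<Prod>j<r. t j powi (k * a j))"
    by (rule prod.cong) (simp_all add: power_int_mult[symmetric] mult.commute[of k])
  finally show ?thesis unfolding char_val_def .
qed

lemma char_val_mult: "t \<in> torus r \<Longrightarrow> char_val r a t * char_val r b t = char_val r (\<lambda>j. a j + b j) (t::nat\<Rightarrow>'k::field)"
  unfolding char_val_def torus_def by (auto simp: prod.distrib[symmetric] power_int_add intro!: prod.cong)

lemma char_val_prod: assumes "t \<in> torus r" shows "finite A \<Longrightarrow>
    (\<Prod>v\<in>A. char_val r (a v) t) = char_val r (\<lambda>j. \<Sum>v\<in>A. a v j) (t::nat\<Rightarrow>'k::field)"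
proof (induction A rule: finite_induct)
  case empty thus ?case by (simp add: char_val_def)
next
  case (insert x A) thus ?case using assms by (simp add: char_val_mult)
qed

lemma powi_split: "(x::'k::field) \<noteq> 0 \<Longrightarrow> x powi c = x ^ nat c / x ^ nat (- c)"
  by (auto simp: power_int_def power_inverse field_simps)

lemma powi_split2: "(p::'k::field) \<noteq> 0 \<Longrightarrow> z \<noteq> 0 \<Longrightarrow>
   (p / z) powi c = (p ^ nat c * z ^ nat (- c)) / (p ^ nat (- c) * z ^ nat c)"
  by (cases "c \<ge> 0") (auto simp: power_int_def power_inverse power_divide field_simps)

lemma B_orb:
  fixes z :: "'a \<Rightarrow> 'k::field"
  assumes t: "t \<in> torus r" and fin: "finite S" and rel: "\<forall>j<r. (\<Sum>v\<in>S. c v * W v j) = 0"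
  shows "(\<Prod>v\<in>S. (char_val r (W v) t * z v) ^ nat (c v) * z v ^ nat (- c v))
       = (\<Prod>v\<in>S. (char_val r (W v) t * z v) ^ nat (- c v) * z v ^ nat (c v))"
proof -
  let ?X = "\<lambda>v. char_val r (W v) t"
  have "(\<Prod>v\<in>S. ?X v powi c v) = char_val r (\<lambda>j. \<Sum>v\<in>S. c v * W v j) t"
    using t fin by (simp add: char_val_powi char_val_prod)
  also have "\<dots> = char_val r (\<lambda>_. 0) t" using rel by (intro char_val_cong) simp
  also have "\<dots> = 1" by (simp add: char_val_def)
  finally have "(\<Prod>v\<in>S. ?X v powi c v) = 1" .
  moreover have "(\<Prod>v\<in>S. ?X v powi c v) = (\<Prod>v\<in>S. ?X v ^ nat (c v)) / (\<Prod>v\<in>S. ?X v ^ nat (- c v))"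
    using t by (simp add: powi_split char_val_nz prod_dividef)
  moreover have "(\<Prod>v\<in>S. ?X v ^ nat (- c v)) \<noteq> 0" using t fin by (simp add: char_val_nz)
  ultimately have eq: "(\<Prod>v\<in>S. ?X v ^ nat (c v)) = (\<Prod>v\<in>S. ?X v ^ nat (- c v))" by simp
  have "(\<Prod>v\<in>S. (?X v * z v) ^ nat (c v) * z v ^ nat (- c v))
      = (\<Prod>v\<in>S. ?X v ^ nat (c v)) * (\<Prod>v\<in>S. z v ^ nat (c v) * z v ^ nat (- c v))"
    by (simp add: prod.distrib[symmetric] power_mult_distrib mult.assoc)
  also have "\<dots> = (\<Prod>v\<in>S. ?X v ^ nat (- c v)) * (\<Prod>v\<in>S. z v ^ nat (- c v) * z v ^ nat (c v))"
    by (simp add: eq mult.commute)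
  also have "\<dots> = (\<Prod>v\<in>S. (?X v * z v) ^ nat (- c v) * z v ^ nat (c v))"
    by (simp add: prod.distrib[symmetric] power_mult_distrib mult.assoc)
  finally show ?thesis .
qed


theorem lemma3p9:
  fixes r n :: nat and w :: "nat \<Rightarrow> nat \<Rightarrow> int" and x y :: "nat \<Rightarrow> 'k::field_char_0"
  assumes "alg_closed_field TYPE('k)"
    and "x \<in> vecs n" and "y \<in> vecs n"
    and "\<forall>\<xi>\<in>vecs r. moment r n w x y \<xi> = 0"
    and "zariski_closed {..<n} ((\<lambda>t. act_V r w t x) ` torus r)"
    and "zariski_closed {..<n} ((\<lambda>t. act_Vd r w t y) ` torus r)"
  shows "zariski_closed (Inl ` {..<n} \<union> Inr ` {..<n})
           ((\<lambda>t. pairvec (act_V r w t x) (act_Vd r w t y)) ` torus r)"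
proof -
  define I :: "(nat + nat) set" where "I = Inl ` {..<n} \<union> Inr ` {..<n}"
  define z where "z = pairvec x y"
  define W :: "nat + nat \<Rightarrow> nat \<Rightarrow> int" where "W = case_sum w (\<lambda>i j. - w i j)"
  define orb where "orb = (\<lambda>t v. char_val r (W v) t * z v)"
  define S where "S = {v\<in>I. z v \<noteq> 0}"
  have finI: "finite I" unfolding I_def by simp
  have finS: "finite S" unfolding S_def using finI by simp
  have SI: "S \<subseteq> I" unfolding S_def by auto
  have zout: "z v = 0" if "v \<notin> I" for v
    using that assms(2,3) unfolding I_def z_def pairvec_def vecs_def
    by (cases v) (auto simp: image_iff not_less)
  have orb_eq: "pairvec (act_V r w t x) (act_Vd r w t y) = orb t" for t
    by (rule ext, case_tac xa) (auto simp: pairvec_def act_V_def act_Vd_def orb_def W_def z_def)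
  have orbL: "orb t \<circ> Inl = act_V r w t x" for t
  proof (rule ext)
    fix i show "(orb t \<circ> Inl) i = act_V r w t x i"
      using fun_cong[OF orb_eq[of t], of "Inl i"] by (simp add: pairvec_def)
  qed
  have orbR: "orb t \<circ> Inr = act_Vd r w t y" for t
  proof (rule ext)
    fix i show "(orb t \<circ> Inr) i = act_Vd r w t y i"
      using fun_cong[OF orb_eq[of t], of "Inr i"] by (simp add: pairvec_def)
  qed
  have img: "(\<lambda>t. pairvec (act_V r w t x) (act_Vd r w t y)) ` torus r = orb ` torus r"
    using orb_eq by simp
  obtain Fx where Fx: "Fx \<subseteq> polyfun {..<n}"
    "(\<lambda>t. act_V r w t x) ` torus r = {a \<in> aff_space {..<n}. \<forall>f\<in>Fx. f a = 0}"
    using assms(5) unfolding zariski_closed_def by blast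
  obtain Fy where Fy: "Fy \<subseteq> polyfun {..<n}"
    "(\<lambda>t. act_Vd r w t y) ` torus r = {a \<in> aff_space {..<n}. \<forall>f\<in>Fy. f a = 0}"
    using assms(6) unfolding zariski_closed_def by blast
  define rel where "rel c \<longleftrightarrow> (\<forall>j<r. (\<Sum>v\<in>S. c v * W v j) = 0)" for c
  define B :: "(nat + nat \<Rightarrow> int) \<Rightarrow> (nat + nat \<Rightarrow> 'k) \<Rightarrow> 'k" where
    "B c p = (\<Prod>v\<in>S. p v ^ nat (c v) * z v ^ nat (- c v)) - (\<Prod>v\<in>S. p v ^ nat (- c v) * z v ^ nat (c v))" for c p
  define F where "F = (\<lambda>f p. f (p \<circ> Inl)) ` Fx \<union> (\<lambda>f p. f (p \<circ> Inr)) ` Fy \<union> B ` {c. rel c}"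
  have Fpoly: "F \<subseteq> polyfun I"
  proof
    fix g assume "g \<in> F"
    then consider (a) f where "f \<in> Fx" "g = (\<lambda>p. f (p \<circ> Inl))"
      | (b) f where "f \<in> Fy" "g = (\<lambda>p. f (p \<circ> Inr))"
      | (c) c where "g = B c" unfolding F_def by blast
    thus "g \<in> polyfun I"
    proof cases
      case a thus ?thesis using Fx(1) by (auto intro!: pf_comp simp: I_def)
    next
      case b thus ?thesis using Fy(1) by (auto intro!: pf_comp simp: I_def)
    next
      case c
      have "B c = (\<lambda>p. (\<Prod>v\<in>S. (\<lambda>p. p v ^ nat (c v) * z v ^ nat (- c v)) p)
                     - (\<Prod>v\<in>S. (\<lambda>p. p v ^ nat (- c v) * z v ^ nat (c v)) p))"
        by (rule ext) (simp add: B_def)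
      also have "\<dots> \<in> polyfun I"
        using SI by (intro pf_sub pf_prod finS polyfun.pf_mult pf_pow polyfun.pf_var polyfun.pf_const) auto
      finally show ?thesis using c by simp
    qed
  qed
  have sub1: "orb ` torus r \<subseteq> {p \<in> aff_space I. \<forall>f\<in>F. f p = 0}"
  proof
    fix p assume "p \<in> orb ` torus r"
    then obtain t where t: "t \<in> torus r" "p = orb t" by blast
    have "p \<in> aff_space I" using t zout unfolding aff_space_def orb_def by simp
    moreover have "f p = 0" if "f \<in> F" for f
    proof -
      from that consider (a) f' where "f' \<in> Fx" "f = (\<lambda>p. f' (p \<circ> Inl))"
        | (b) f' where "f' \<in> Fy" "f = (\<lambda>p. f' (p \<circ> Inr))"
        | (c) c where "rel c" "f = B c" unfolding F_def by blast
      thus ?thesis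
      proof cases
        case a
        have "act_V r w t x \<in> (\<lambda>t. act_V r w t x) ` torus r" using t by blast
        thus ?thesis using a Fx(2) t orbL by auto
      next
        case b
        have "act_Vd r w t y \<in> (\<lambda>t. act_Vd r w t y) ` torus r" using t by blast
        thus ?thesis using b Fy(2) t orbR by auto
      next
        case c
        thus ?thesis using B_orb[OF t(1) finS, of c W z] t(2)
          unfolding B_def rel_def orb_def by simp
      qed
    qed
    ultimately show "p \<in> {p \<in> aff_space I. \<forall>f\<in>F. f p = 0}" by blast
  qed
  have sub2: "{p \<in> aff_space I. \<forall>f\<in>F. f p = 0} \<subseteq> orb ` torus r"
  proof
    fix p assume p: "p \<in> {p \<in> aff_space I. \<forall>f\<in>F. f p = 0}"
    have pI: "p \<in> aff_space I" and pF: "\<forall>f\<in>F. f p = 0" using p by auto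
    have "p \<circ> Inl \<in> aff_space {..<n}" using pI unfolding aff_space_def I_def by auto
    moreover have "\<forall>f\<in>Fx. f (p \<circ> Inl) = 0" using pF unfolding F_def by auto
    ultimately have "p \<circ> Inl \<in> (\<lambda>t. act_V r w t x) ` torus r" using Fx(2) by blast
    then obtain t1 where t1: "t1 \<in> torus r" "p \<circ> Inl = act_V r w t1 x" by blast
    have "p \<circ> Inr \<in> aff_space {..<n}" using pI unfolding aff_space_def I_def by auto
    moreover have "\<forall>f\<in>Fy. f (p \<circ> Inr) = 0" using pF unfolding F_def by auto
    ultimately have "p \<circ> Inr \<in> (\<lambda>t. act_Vd r w t y) ` torus r" using Fy(2) by blast
    then obtain t2 where t2: "t2 \<in> torus r" "p \<circ> Inr = act_Vd r w t2 y" by blast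
    have pform: "\<exists>t\<in>torus r. p v = char_val r (W v) t * z v" for v
    proof (cases v)
      case (Inl i)
      have "p (Inl i) = act_V r w t1 x i" using fun_cong[OF t1(2), of i] by simp
      thus ?thesis using t1(1) Inl by (auto simp: act_V_def W_def z_def pairvec_def)
    next
      case (Inr i)
      have "p (Inr i) = act_Vd r w t2 y i" using fun_cong[OF t2(2), of i] by simp
      thus ?thesis using t2(1) Inr by (auto simp: act_Vd_def W_def z_def pairvec_def)
    qed
    have pz: "p v = 0 \<longleftrightarrow> z v = 0" for v
      using pform[of v] char_val_nz by fastforce
    define u where "u v = p v / z v" for v
    have unz: "\<forall>v\<in>S. u v \<noteq> 0" unfolding u_def S_def using pz by auto
    have ok: "rel_ok r S W u" unfolding rel_ok_def
    proof (intro allI impI)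
      fix c assume rc: "\<forall>j<r. (\<Sum>v\<in>S. c v * W v j) = 0"
      hence "B c \<in> F" unfolding F_def rel_def by blast
      hence "B c p = 0" using pF by blast
      hence eq: "(\<Prod>v\<in>S. p v ^ nat (c v) * z v ^ nat (- c v)) = (\<Prod>v\<in>S. p v ^ nat (- c v) * z v ^ nat (c v))"
        unfolding B_def by simp
      have "(\<Prod>v\<in>S. u v powi c v) = (\<Prod>v\<in>S. (p v ^ nat (c v) * z v ^ nat (- c v)) / (p v ^ nat (- c v) * z v ^ nat (c v)))"
        by (rule prod.cong) (use pz in \<open>auto simp: u_def S_def powi_split2\<close>)
      also have "\<dots> = (\<Prod>v\<in>S. p v ^ nat (c v) * z v ^ nat (- c v)) / (\<Prod>v\<in>S. p v ^ nat (- c v) * z v ^ nat (c v))"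
        by (simp add: prod_dividef)
      also have "\<dots> = 1" using eq finS pz by (simp add: S_def)
      finally show "(\<Prod>v\<in>S. u v powi c v) = 1" .
    qed
    obtain t where t: "t \<in> torus r" "\<forall>v\<in>S. char_val r (W v) t = u v"
      using torus_solve[OF assms(1) finS unz ok] by blast
    have "p = orb t"
    proof
      fix v
      show "p v = orb t v"
      proof (cases "v \<in> S")
        case True thus ?thesis using t(2) pz unfolding orb_def u_def S_def by auto
      next
        case False
        hence "z v = 0" using zout unfolding S_def by blast
        thus ?thesis using pz unfolding orb_def by simp
      qed
    qed
    thus "p \<in> orb ` torus r" using t(1) by blast
  qed
  have "orb ` torus r \<subseteq> aff_space I" using sub1 by blast
  moreover have "orb ` torus r = {p \<in> aff_space I. \<forall>f\<in>F. f p = 0}" using sub1 sub2 by blast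
  ultimately have "zariski_closed I (orb ` torus r)"
    unfolding zariski_closed_def using Fpoly by blast
  thus ?thesis unfolding img I_def .
qed

end
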